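(* Let $L=\langle S,A,\to\rangle$ be a labelled transition system. For all $x,y\in\{o,b\}$, the relation $\equiv^{ed}_{E(x,y)}$ is an $(x,y)$-generic bisimulation.
   Context: An LTS is $\langle S,A,\to\rangle$ with states $S$, actions $A$ containing the internal action $\tau$, and $\to\subseteq S\times A\times S$; write $s\xrightarrow{a}t$, and $\twoheadrightarrow$ for the reflexive-transitive closure of $\xrightarrow{\tau}$. For $R\subseteq S\times S$ and $s,s',t$: $s\twoheadrightarrow_{o,R,t}s'$ iff $s\twoheadrightarrow s'$; $s\twoheadrightarrow_{b,R,t}s'$ iff $s\twoheadrightarrow s'$, $t\,R\,s$ and $t\,R\,s'$. For $x,y\in\{o,b\}$, a symmetric $R$ is an $(x,y)$-generic bisimulation if whenever $s\,R\,t$ and $s\xrightarrow{a}s'$, either $a=\tau$ and $s'\,R\,t$, or there exist $t',t_1,t_2$ with $t\twoheadrightarrow_{x,R,s}t_1\xrightarrow{a}t_2\twoheadrightarrow_{y,R,s'}t'$ and $s'\,R\,t'$. Game with explicit divergence. Let $\frown,\smile$ be formal tags and $E\subseteq\{\frown,\smile\}$. Spoiler-owned configurations $\langle (s,t),c,m,r\rangle_S$ and Duplicator-owned $\langle (s,t),c,m,r\rangle_D$ have $(s,t)\in S\times S$, $c\in (A\times S)\cup\{\dagger\}$, $m\in (S\times\{\frown,\smile\})\cup\{\dagger\}$, $r\in\{*,\checkmark\}$. From $\langle (s,t),c,m,r\rangle_S$ Spoiler may: (S1) move to $\langle (s,t),c,m,*\rangle_D$ if $c\neq\dagger$; (S2a)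 for some $s\xrightarrow{a}s'$, move to $\langle (s,t),(a,s'),(t,\frown),*\rangle_D$ if $c=\dagger$; (S2b) for some $s\xrightarrow{a}s'$, move to $\langle (s,t),(a,s'),(t,\frown),\checkmark\rangle_D$ if $c\neq (a,s')$; (S3) for some $t\xrightarrow{a}t'$, move to $\langle (t,s),(a,t'),(s,\frown),\checkmark\rangle_D$. From $\langle (u,v),(a,u'),(\bar v,f),r\rangle_D$ Duplicator may: (D1) move to $\langle (u',\bar v),\dagger,\dagger,*\rangle_S$ if $a=\tau$; (D2) if $f=\frown$ and $\bar v\xrightarrow{a}v'$: (a) move to $\langle (u',v'),(a,u'),(v',\smile),*\rangle_S$, or (b) move to $\langle (u',v'),\dagger,\dagger,\checkmark\rangle_S$, or (c) only if $\smile\in E$, move to $\langle (u,v),(a,u'),(v',\smile),*\rangle_S$; (D3) for some $\bar v\xrightarrow{\tau}v'$: (a) move to $\langle (u,v'),(a,u'),(v',f),*\rangle_S$, or (b) only if $f=\smile$, move to $\langle (u',v'),\dagger,\dagger,\checkmark\rangle_S$, or (c) only if $f\in E$, move to $\langle (u,v),(a,u'),(v',f),*\rangle_S$. Duplicator wins a finite play if Spoiler gets stuck, and an infinite play if it has infinitely many $\checkmark$ rewards; other plays are won by Spoiler. $s\equiv^{ed}_E t$ iff Duplicator has a strategy winning all plays from $\langle (s,t),\dagger,\dagger,*\rangle_S$. $E(x,y)$ is the smallest set with $\frown\in E(o,y)$ and $\smile\in E(x,o)$ for all $x,y\in\{o,b\}$. *)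

theory Defs
  imports Main
begin

text \<open>An LTS over states 's and actions 'a is given by a transition predicate
  tr s a s' (meaning s --a--> s') and a designated internal action tau.\<close>

datatype ob = ObO | ObB

datatype tag = Frown | Smile

datatype reward = Star | Check

text \<open>Configurations. None encodes the dagger.  SConf = Spoiler-owned, DConf = Duplicator-owned.\<close>
datatype ('s, 'a) conf =
    SConf "'s \<times> 's" "('a \<times> 's) option" "('s \<times> tag) option" reward
  | DConf "'s \<times> 's" "('a \<times> 's) option" "('s \<times> tag) option" reward

definition tau_steps :: "('s \<Rightarrow> 'a \<Rightarrow> 's \<Rightarrow> bool) \<Rightarrow> 'a \<Rightarrow> 's \<Rightarrow> 's \<Rightarrow> bool" where
  "tau_steps tr tau = (\<lambda>u v. tr u tau v)\<^sup>*\<^sup>*"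

definition wstep :: "('s \<Rightarrow> 'a \<Rightarrow> 's \<Rightarrow> bool) \<Rightarrow> 'a \<Rightarrow> ob \<Rightarrow> ('s \<Rightarrow> 's \<Rightarrow> bool)
    \<Rightarrow> 's \<Rightarrow> 's \<Rightarrow> 's \<Rightarrow> bool" where
  "wstep tr tau x R t s s1 \<longleftrightarrow>
     tau_steps tr tau s s1 \<and> (x = ObB \<longrightarrow> R t s \<and> R t s1)"

definition generic_bisim :: "('s \<Rightarrow> 'a \<Rightarrow> 's \<Rightarrow> bool) \<Rightarrow> 'a \<Rightarrow> ob \<Rightarrow> ob
    \<Rightarrow> ('s \<Rightarrow> 's \<Rightarrow> bool) \<Rightarrow> bool" where
  "generic_bisim tr tau x y R \<longleftrightarrow> symp R \<and>
     (\<forall>s t a s'. R s t \<longrightarrow> tr s a s' \<longrightarrow>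
        (a = tau \<and> R s' t) \<or>
        (\<exists>t' t1 t2. wstep tr tau x R s t t1 \<and> tr t1 a t2
                    \<and> wstep tr tau y R s' t2 t' \<and> R s' t'))"

inductive move :: "('s \<Rightarrow> 'a \<Rightarrow> 's \<Rightarrow> bool) \<Rightarrow> 'a \<Rightarrow> tag set
    \<Rightarrow> ('s, 'a) conf \<Rightarrow> ('s, 'a) conf \<Rightarrow> bool"
  for tr tau E where
  S1: "c \<noteq> None \<Longrightarrow> move tr tau E (SConf (s, t) c m r) (DConf (s, t) c m Star)"
| S2a: "c = None \<Longrightarrow> tr s a s' \<Longrightarrow>
        move tr tau E (SConf (s, t) c m r) (DConf (s, t) (Some (a, s')) (Some (t, Frown)) Star)"
| S2b: "c \<noteq> Some (a, s') \<Longrightarrow> tr s a s' \<Longrightarrow>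
        move tr tau E (SConf (s, t) c m r) (DConf (s, t) (Some (a, s')) (Some (t, Frown)) Check)"
| S3: "tr t a t' \<Longrightarrow>
        move tr tau E (SConf (s, t) c m r) (DConf (t, s) (Some (a, t')) (Some (s, Frown)) Check)"
| D1: "a = tau \<Longrightarrow>
        move tr tau E (DConf (u, v) (Some (a, u')) (Some (vb, f)) r) (SConf (u', vb) None None Star)"
| D2a: "f = Frown \<Longrightarrow> tr vb a v' \<Longrightarrow>
        move tr tau E (DConf (u, v) (Some (a, u')) (Some (vb, f)) r)
          (SConf (u', v') (Some (a, u')) (Some (v', Smile)) Star)"
| D2b: "f = Frown \<Longrightarrow> tr vb a v' \<Longrightarrow>
        move tr tau E (DConf (u, v) (Some (a, u')) (Some (vb, f)) r)
          (SConf (u', v') None None Check)"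
| D2c: "f = Frown \<Longrightarrow> tr vb a v' \<Longrightarrow> Smile \<in> E \<Longrightarrow>
        move tr tau E (DConf (u, v) (Some (a, u')) (Some (vb, f)) r)
          (SConf (u, v) (Some (a, u')) (Some (v', Smile)) Star)"
| D3a: "tr vb tau v' \<Longrightarrow>
        move tr tau E (DConf (u, v) (Some (a, u')) (Some (vb, f)) r)
          (SConf (u, v') (Some (a, u')) (Some (v', f)) Star)"
| D3b: "tr vb tau v' \<Longrightarrow> f = Smile \<Longrightarrow>
        move tr tau E (DConf (u, v) (Some (a, u')) (Some (vb, f)) r)
          (SConf (u', v') None None Check)"
| D3c: "tr vb tau v' \<Longrightarrow> f \<in> E \<Longrightarrow>
        move tr tau E (DConf (u, v) (Some (a, u')) (Some (vb, f)) r)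
          (SConf (u, v) (Some (a, u')) (Some (v', f)) Star)"

fun is_dup :: "('s, 'a) conf \<Rightarrow> bool" where
  "is_dup (SConf _ _ _ _) = False"
| "is_dup (DConf _ _ _ _) = True"

fun rew :: "('s, 'a) conf \<Rightarrow> reward" where
  "rew (SConf _ _ _ r) = r"
| "rew (DConf _ _ _ r) = r"

text \<open>A (history-dependent) Duplicator strategy maps the play so far (a nonempty list of
  configurations, ending in a Duplicator-owned one) to the next configuration.\<close>
type_synonym ('s, 'a) dstrat = "('s, 'a) conf list \<Rightarrow> ('s, 'a) conf"

definition cons_prefix :: "('s \<Rightarrow> 'a \<Rightarrow> 's \<Rightarrow> bool) \<Rightarrow> 'a \<Rightarrow> tag set \<Rightarrow> ('s, 'a) dstrat
    \<Rightarrow> ('s, 'a) conf \<Rightarrow> ('s, 'a) conf list \<Rightarrow> bool" where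
  "cons_prefix tr tau E f c0 p \<longleftrightarrow> p \<noteq> [] \<and> hd p = c0 \<and>
     (\<forall>i. Suc i < length p \<longrightarrow> move tr tau E (p ! i) (p ! Suc i) \<and>
          (is_dup (p ! i) \<longrightarrow> p ! Suc i = f (take (Suc i) p)))"

definition cons_play :: "('s \<Rightarrow> 'a \<Rightarrow> 's \<Rightarrow> bool) \<Rightarrow> 'a \<Rightarrow> tag set \<Rightarrow> ('s, 'a) dstrat
    \<Rightarrow> ('s, 'a) conf \<Rightarrow> (nat \<Rightarrow> ('s, 'a) conf) \<Rightarrow> bool" where
  "cons_play tr tau E f c0 \<pi> \<longleftrightarrow> \<pi> 0 = c0 \<and>
     (\<forall>i. move tr tau E (\<pi> i) (\<pi> (Suc i)) \<and>
          (is_dup (\<pi> i) \<longrightarrow> \<pi> (Suc i) = f (map \<pi> [0..<Suc i])))"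

text \<open>f wins all plays from c0: Duplicator is never stuck (so every finite maximal play
  ends with Spoiler stuck), and every infinite play has infinitely many check rewards.\<close>
definition dup_winning :: "('s \<Rightarrow> 'a \<Rightarrow> 's \<Rightarrow> bool) \<Rightarrow> 'a \<Rightarrow> tag set \<Rightarrow> ('s, 'a) dstrat
    \<Rightarrow> ('s, 'a) conf \<Rightarrow> bool" where
  "dup_winning tr tau E f c0 \<longleftrightarrow>
     (\<forall>p. cons_prefix tr tau E f c0 p \<longrightarrow> is_dup (last p) \<longrightarrow>
          move tr tau E (last p) (f p)) \<and>
     (\<forall>\<pi>. cons_play tr tau E f c0 \<pi> \<longrightarrow> (\<exists>\<^sub>\<infinity>i. rew (\<pi> i) = Check))"

definition equiv_ed :: "('s \<Rightarrow> 'a \<Rightarrow> 's \<Rightarrow> bool) \<Rightarrow> 'a \<Rightarrow> tag set \<Rightarrow> 's \<Rightarrow> 's \<Rightarrow> bool" where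
  "equiv_ed tr tau E s t \<longleftrightarrow>
     (\<exists>f. dup_winning tr tau E f (SConf (s, t) None None Star))"

definition Exy :: "ob \<Rightarrow> ob \<Rightarrow> tag set" where
  "Exy x y = {tg. (tg = Frown \<and> x = ObO) \<or> (tg = Smile \<and> y = ObO)}"

end

theory Submission
  imports Defs "HOL-Library.Infinite_Set"
begin

lemma infm_shift: "(\<exists>\<^sub>\<infinity>i. P (i + k)) \<Longrightarrow> (\<exists>\<^sub>\<infinity>i. P (i::nat))"
  unfolding INFM_nat
proof
  fix m assume H: "\<forall>m. \<exists>n>m. P (n + k)"
  then obtain n where "n > m" "P (n + k)" by blast
  then show "\<exists>n>m. P n" by (intro exI[of _ "n+k"]) auto
qed

lemma infm_shift2: "(\<exists>\<^sub>\<infinity>i. P (i::nat)) \<Longrightarrow> (\<exists>\<^sub>\<infinity>i. P (i + k))"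
  unfolding INFM_nat
proof
  fix m assume H: "\<forall>m. \<exists>n>m. P n"
  then obtain n where "n > m + k" "P n" by blast
  then show "\<exists>n>m. P (n + k)" by (intro exI[of _ "n-k"]) auto
qed

context
  fixes tr :: "'s \<Rightarrow> 'a \<Rightarrow> 's \<Rightarrow> bool" and tau :: 'a and E :: "tag set"
begin

lemma prepend:
  assumes G: "\<And>d. move tr tau E c0 d \<Longrightarrow> (is_dup c0 \<Longrightarrow> d = c1) \<Longrightarrow> dup_winning tr tau E (G d) d"
  and c1: "is_dup c0 \<Longrightarrow> move tr tau E c0 c1"
  shows "dup_winning tr tau E (\<lambda>p. if tl p = [] then c1 else G (hd (tl p)) (tl p)) c0"
    (is "dup_winning _ _ _ ?F _")
  unfolding dup_winning_def
proof (intro conjI allI impI)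
  fix p assume cp: "cons_prefix tr tau E ?F c0 p" and dl: "is_dup (last p)"
  show "move tr tau E (last p) (?F p)"
  proof (cases "tl p = []")
    case True
    with cp have "p = [c0]" unfolding cons_prefix_def by (cases p) auto
    with dl c1 show ?thesis by simp
  next
    case False
    define q where "q = tl p"
    have pq: "p = c0 # q" using cp False unfolding cons_prefix_def q_def by (cases p) auto
    have qne: "q \<noteq> []" using False q_def by simp
    define d where "d = hd q"
    have q0: "q ! 0 = d" using qne d_def by (cases q) auto
    have cpi: "\<And>i. Suc i < length p \<Longrightarrow> move tr tau E (p ! i) (p ! Suc i) \<and>
          (is_dup (p ! i) \<longrightarrow> p ! Suc i = ?F (take (Suc i) p))"
      using cp unfolding cons_prefix_def by blast
    have mv: "move tr tau E c0 d" using cpi[of 0] pq qne q0 by simp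
    have dc1: "d = c1" if "is_dup c0"
      using cpi[of 0] pq qne q0 that by simp
    have wd: "dup_winning tr tau E (G d) d" using G mv dc1 by blast
    have cq: "cons_prefix tr tau E (G d) d q"
      unfolding cons_prefix_def
    proof (intro conjI allI impI)
      show "q \<noteq> []" by fact
      show "hd q = d" by (simp add: d_def)
    next
      fix i assume "Suc i < length q"
      then have "Suc (Suc i) < length p" using pq by simp
      from cpi[OF this] show "move tr tau E (q ! i) (q ! Suc i)" using pq by simp
    next
      fix i assume a: "Suc i < length q" and b: "is_dup (q ! i)"
      then have "Suc (Suc i) < length p" using pq by simp
      from cpi[OF this] b pq have "q ! Suc i = ?F (take (Suc (Suc i)) p)" by simp
      also have "\<dots> = G d (take (Suc i) q)" using pq qne d_def by (cases q) auto
      finally show "q ! Suc i = G d (take (Suc i) q)" .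
    qed
    have "move tr tau E (last q) (G d q)"
      using wd cq dl pq qne unfolding dup_winning_def by auto
    then show ?thesis using pq qne d_def by simp
  qed
next
  fix \<pi> assume cp: "cons_play tr tau E ?F c0 \<pi>"
  have cpi: "\<And>i. move tr tau E (\<pi> i) (\<pi> (Suc i)) \<and>
          (is_dup (\<pi> i) \<longrightarrow> \<pi> (Suc i) = ?F (map \<pi> [0..<Suc i]))"
    and p0: "\<pi> 0 = c0" using cp unfolding cons_play_def by auto
  define d where "d = \<pi> 1"
  have mv: "move tr tau E c0 d" using cpi[of 0] p0 d_def by simp
  have dc1: "d = c1" if "is_dup c0" using cpi[of 0] p0 d_def that by simp
  have wd: "dup_winning tr tau E (G d) d" using G mv dc1 by blast
  have mp: "map \<pi> [0..<Suc (Suc i)] = \<pi> 0 # map (\<lambda>i. \<pi> (Suc i)) [0..<Suc i]" for i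
    by (induct i) auto
  have "cons_play tr tau E (G d) d (\<lambda>i. \<pi> (Suc i))"
    unfolding cons_play_def
  proof (intro conjI allI impI)
    show "\<pi> (Suc 0) = d" by (simp add: d_def)
  next
    fix i show "move tr tau E (\<pi> (Suc i)) (\<pi> (Suc (Suc i)))" using cpi by blast
  next
    fix i assume "is_dup (\<pi> (Suc i))"
    then have "\<pi> (Suc (Suc i)) = ?F (map \<pi> [0..<Suc (Suc i)])" using cpi by blast
    also have "\<dots> = G d (map (\<lambda>i. \<pi> (Suc i)) [0..<Suc i])"
      unfolding mp by (simp add: d_def hd_map del: upt_Suc)
    finally show "\<pi> (Suc (Suc i)) = G d (map (\<lambda>i. \<pi> (Suc i)) [0..<Suc i])" .
  qed
  then have "\<exists>\<^sub>\<infinity>i. rew (\<pi> (Suc i)) = Check" using wd unfolding dup_winning_def by blast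
  then have "\<exists>\<^sub>\<infinity>i. rew (\<pi> (i + 1)) = Check" by simp
  then show "\<exists>\<^sub>\<infinity>i. rew (\<pi> i) = Check" by (rule infm_shift)
qed

lemma residual_prefix:
  assumes cp: "cons_prefix tr tau E f c0 p"
    and cq: "cons_prefix tr tau E (\<lambda>q. f (butlast p @ q)) (last p) q"
  shows "cons_prefix tr tau E f c0 (butlast p @ q)"
proof -
  have pne: "p \<noteq> []" and hp: "hd p = c0" using cp unfolding cons_prefix_def by auto
  obtain b l where pb: "p = b @ [l]" using pne by (metis rev_exhaust)
  have cpi: "\<And>i. Suc i < length b + 1 \<Longrightarrow> move tr tau E ((b @ [l]) ! i) ((b @ [l]) ! Suc i) \<and>
          (is_dup ((b @ [l]) ! i) \<longrightarrow> (b @ [l]) ! Suc i = f (take (Suc i) (b @ [l])))"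
    using cp unfolding cons_prefix_def pb by simp
  have hp': "hd (b @ [l]) = c0" using hp pb by simp
  have qne: "q \<noteq> []" and hq: "hd q = l" using cq pb unfolding cons_prefix_def by auto
  have cqi: "\<And>i. Suc i < length q \<Longrightarrow> move tr tau E (q ! i) (q ! Suc i) \<and>
          (is_dup (q ! i) \<longrightarrow> q ! Suc i = f (b @ take (Suc i) q))"
    using cq pb unfolding cons_prefix_def by simp
  have q0: "q ! 0 = l" using qne hq by (cases q) auto
  show ?thesis unfolding cons_prefix_def pb butlast_snoc
  proof (intro conjI)
    show "b @ q \<noteq> []" using qne by simp
    show "hd (b @ q) = c0"
    proof (cases "b = []")
      case True then show ?thesis using hp' hq by simp
    next
      case False then show ?thesis using hp' by simp
    qed
  next
    show "\<forall>i. Suc i < length (b @ q) \<longrightarrow> move tr tau E ((b @ q) ! i) ((b @ q) ! Suc i) \<and>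
          (is_dup ((b @ q) ! i) \<longrightarrow> (b @ q) ! Suc i = f (take (Suc i) (b @ q)))"
    proof (intro allI impI)
    fix i assume i: "Suc i < length (b @ q)"
    show "move tr tau E ((b @ q) ! i) ((b @ q) ! Suc i) \<and>
          (is_dup ((b @ q) ! i) \<longrightarrow> (b @ q) ! Suc i = f (take (Suc i) (b @ q)))"
    proof (cases "i < length b")
      case True
      have e1: "(b @ q) ! i = (b @ [l]) ! i" using True by (simp add: nth_append)
      have e2: "(b @ q) ! Suc i = (b @ [l]) ! Suc i"
      proof (cases "Suc i < length b")
        case True then show ?thesis by (simp add: nth_append)
      next
        case False
        then have "Suc i = length b" using \<open>i < length b\<close> by simp
        then show ?thesis using q0 by (simp add: nth_append)
      qed
      have e3: "take (Suc i) (b @ q) = take (Suc i) (b @ [l])" using True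
        by (simp add: take_append)
      have "Suc i < length b + 1" using True by simp
      from cpi[OF this] show ?thesis using e1 e2 e3 by simp
    next
      case False
      define j where "j = i - length b"
      have ij: "i = length b + j" using False j_def by simp
      have j: "Suc j < length q" using i ij by simp
      have e1: "(b @ q) ! i = q ! j" using ij by (simp add: nth_append)
      have e2: "(b @ q) ! Suc i = q ! Suc j" using ij by (simp add: nth_append)
      have e3: "take (Suc i) (b @ q) = b @ take (Suc j) q" using ij by simp
      from cqi[OF j] show ?thesis using e1 e2 e3 by simp
    qed
    qed
  qed
qed

lemma map_splice:
  assumes a1: "\<And>i. i < length b \<Longrightarrow> \<pi> i = b ! i" and a2: "\<And>j. \<pi> (length b + j) = \<pi>' j"
  shows "map \<pi> [0..<length b + k] = b @ map \<pi>' [0..<k]"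
proof (induct k)
  case 0
  show ?case by (rule nth_equalityI) (simp_all add: a1)
next
  case (Suc k)
  have "map \<pi> [0..<length b + Suc k] = map \<pi> [0..<length b + k] @ [\<pi> (length b + k)]" by simp
  then show ?case using Suc a2 by simp
qed

lemma map_splice2:
  assumes "\<And>i. i < length b \<Longrightarrow> \<pi> i = b ! i" and "n \<le> length b"
  shows "map \<pi> [0..<n] = take n b"
  by (rule nth_equalityI) (use assms in auto)

lemma residual:
  assumes w: "dup_winning tr tau E f c0" and cp: "cons_prefix tr tau E f c0 p"
  shows "dup_winning tr tau E (\<lambda>q. f (butlast p @ q)) (last p)"
  unfolding dup_winning_def
proof (intro conjI allI impI)
  fix q assume cq: "cons_prefix tr tau E (\<lambda>q. f (butlast p @ q)) (last p) q"
    and dl: "is_dup (last q)"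
  have c2: "cons_prefix tr tau E f c0 (butlast p @ q)" by (rule residual_prefix[OF cp cq])
  have qne: "q \<noteq> []" using cq unfolding cons_prefix_def by auto
  then have "last (butlast p @ q) = last q" by simp
  with c2 dl w show "move tr tau E (last q) (f (butlast p @ q))"
    unfolding dup_winning_def by metis
next
  fix \<pi>' assume cq: "cons_play tr tau E (\<lambda>q. f (butlast p @ q)) (last p) \<pi>'"
  define b where "b = butlast p"
  have pne: "p \<noteq> []" and hp: "hd p = c0" using cp unfolding cons_prefix_def by auto
  have pb: "p = b @ [last p]" using pne b_def by simp
  have lp: "length p = Suc (length b)" using pb by (metis length_append_singleton)
  have cpi: "\<And>i. Suc i < length p \<Longrightarrow> move tr tau E (p ! i) (p ! Suc i) \<and>
          (is_dup (p ! i) \<longrightarrow> p ! Suc i = f (take (Suc i) p))"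
    using cp unfolding cons_prefix_def by blast
  have cqi: "\<And>i. move tr tau E (\<pi>' i) (\<pi>' (Suc i)) \<and>
          (is_dup (\<pi>' i) \<longrightarrow> \<pi>' (Suc i) = f (b @ map \<pi>' [0..<Suc i]))"
    and q0: "\<pi>' 0 = last p"
    using cq unfolding cons_play_def b_def by auto
  define \<pi> where "\<pi> i = (if i < length b then b ! i else \<pi>' (i - length b))" for i
  have s1: "\<And>i. i < length b \<Longrightarrow> \<pi> i = b ! i" by (simp add: \<pi>_def)
  have s2: "\<And>j. \<pi> (length b + j) = \<pi>' j" by (simp add: \<pi>_def)
  have pp: "\<And>i. i < length p \<Longrightarrow> \<pi> i = p ! i"
  proof -
    fix i assume "i < length p"
    then show "\<pi> i = p ! i"
    proof (cases "i < length b")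
      case True then show ?thesis using s1 by (subst pb) (simp add: nth_append)
    next
      case False then have "i = length b" using \<open>i < length p\<close> lp by simp
      then show ?thesis using s2[of 0] q0 by (subst pb) simp
    qed
  qed
  have "cons_play tr tau E f c0 \<pi>"
    unfolding cons_play_def
  proof (intro conjI allI impI)
    show "\<pi> 0 = c0" using pp[of 0] lp hp pne by (simp add: hd_conv_nth)
  next
    fix i
    show "move tr tau E (\<pi> i) (\<pi> (Suc i))"
    proof (cases "Suc i < length p")
      case True then show ?thesis using cpi pp by simp
    next
      case False
      define j where "j = i - length b"
      have ij: "i = length b + j" using False lp j_def by simp
      then show ?thesis using cqi s2[of j] s2[of "Suc j"] by simp
    qed
  next
    fix i assume d: "is_dup (\<pi> i)"
    show "\<pi> (Suc i) = f (map \<pi> [0..<Suc i])"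
    proof (cases "Suc i < length p")
      case True
      have "map \<pi> [0..<Suc i] = take (Suc i) b" using True lp by (intro map_splice2[OF s1]) auto
      also have "\<dots> = take (Suc i) p" using True lp by (subst pb) (simp add: take_append)
      finally show ?thesis using cpi[OF True] pp True d by simp
    next
      case False
      define j where "j = i - length b"
      have ij: "i = length b + j" using False lp j_def by simp
      have "map \<pi> [0..<Suc i] = b @ map \<pi>' [0..<Suc j]" using ij map_splice[OF s1 s2, of "Suc j"] by simp
      then show ?thesis using cqi d s2[of j] s2[of "Suc j"] ij by simp
    qed
  qed
  then have "\<exists>\<^sub>\<infinity>i. rew (\<pi> i) = Check" using w unfolding dup_winning_def by blast
  then have "\<exists>\<^sub>\<infinity>j. rew (\<pi> (j + length b)) = Check" by (rule infm_shift2)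
  then show "\<exists>\<^sub>\<infinity>j. rew (\<pi>' j) = Check" using s2 by (simp add: add.commute)
qed

definition W :: "('s, 'a) conf \<Rightarrow> bool" where
  "W c \<longleftrightarrow> (\<exists>f. dup_winning tr tau E f c)"

lemma cons_extend:
  assumes cp: "cons_prefix tr tau E f c0 p" and mv: "move tr tau E (last p) c'"
    and st: "is_dup (last p) \<Longrightarrow> c' = f p"
  shows "cons_prefix tr tau E f c0 (p @ [c'])"
proof -
  have pne: "p \<noteq> []" and hp: "hd p = c0" using cp unfolding cons_prefix_def by auto
  have cpi: "\<And>i. Suc i < length p \<Longrightarrow> move tr tau E (p ! i) (p ! Suc i) \<and>
          (is_dup (p ! i) \<longrightarrow> p ! Suc i = f (take (Suc i) p))"
    using cp unfolding cons_prefix_def by blast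
  show ?thesis unfolding cons_prefix_def
  proof (intro conjI)
    show "p @ [c'] \<noteq> []" by simp
    show "hd (p @ [c']) = c0" using pne hp by simp
    show "\<forall>i. Suc i < length (p @ [c']) \<longrightarrow> move tr tau E ((p @ [c']) ! i) ((p @ [c']) ! Suc i) \<and>
          (is_dup ((p @ [c']) ! i) \<longrightarrow> (p @ [c']) ! Suc i = f (take (Suc i) (p @ [c'])))"
    proof (intro allI impI)
      fix i assume i: "Suc i < length (p @ [c'])"
      show "move tr tau E ((p @ [c']) ! i) ((p @ [c']) ! Suc i) \<and>
          (is_dup ((p @ [c']) ! i) \<longrightarrow> (p @ [c']) ! Suc i = f (take (Suc i) (p @ [c'])))"
      proof (cases "Suc i < length p")
        case True then show ?thesis using cpi[OF True] by (simp add: nth_append)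
      next
        case False
        then have il: "Suc i = length p" using i by simp
        have "length p - Suc 0 = i" using il by simp
        then have e1: "(p @ [c']) ! i = last p" using il pne by (simp add: nth_append last_conv_nth)
        have e2: "(p @ [c']) ! Suc i = c'" using il by (metis nth_append_length)
        have e3: "take (Suc i) (p @ [c']) = p" using il by simp
        show ?thesis unfolding e1 e2 e3 using mv st by simp
      qed
    qed
  qed
qed

lemma W_succ: "W c \<Longrightarrow> \<not> is_dup c \<Longrightarrow> move tr tau E c d \<Longrightarrow> W d"
proof -
  assume "W c" "\<not> is_dup c" "move tr tau E c d"
  then obtain f where w: "dup_winning tr tau E f c" unfolding W_def by blast
  have "cons_prefix tr tau E f c [c]" unfolding cons_prefix_def by simp
  then have "cons_prefix tr tau E f c ([c] @ [d])" using \<open>\<not> is_dup c\<close> \<open>move tr tau E c d\<close>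
    by (intro cons_extend) auto
  from residual[OF w this] show "W d" unfolding W_def by auto
qed

lemma W_dup: "W d \<Longrightarrow> is_dup d \<Longrightarrow> \<exists>c'. move tr tau E d c' \<and> W c'"
proof -
  assume "W d" "is_dup d"
  then obtain f where w: "dup_winning tr tau E f d" unfolding W_def by blast
  have c1: "cons_prefix tr tau E f d [d]" unfolding cons_prefix_def by simp
  then have mv: "move tr tau E d (f [d])" using w \<open>is_dup d\<close> unfolding dup_winning_def by auto
  have "cons_prefix tr tau E f d ([d] @ [f [d]])" using mv by (intro cons_extend[OF c1]) auto
  from residual[OF w this] mv show ?thesis unfolding W_def by auto
qed

lemma W_spoil_intro: "\<not> is_dup c \<Longrightarrow> (\<And>d. move tr tau E c d \<Longrightarrow> W d) \<Longrightarrow> W c"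
proof -
  assume nd: "\<not> is_dup c" and H: "\<And>d. move tr tau E c d \<Longrightarrow> W d"
  define G where "G d = (SOME g. dup_winning tr tau E g d)" for d
  have "dup_winning tr tau E (\<lambda>p. if tl p = [] then c else G (hd (tl p)) (tl p)) c"
  proof (rule prepend)
    fix d assume "move tr tau E c d"
    then have "W d" by (rule H)
    then show "dup_winning tr tau E (G d) d" unfolding W_def G_def by (rule someI_ex)
  next
    show "is_dup c \<Longrightarrow> move tr tau E c c" using nd by simp
  qed
  then show "W c" unfolding W_def by blast
qed

lemma W_dup_intro: "is_dup d \<Longrightarrow> move tr tau E d c' \<Longrightarrow> W c' \<Longrightarrow> W d"
proof -
  assume dd: "is_dup d" and mv: "move tr tau E d c'" and "W c'"
  then obtain g where w: "dup_winning tr tau E g c'" unfolding W_def by blast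
  have "dup_winning tr tau E (\<lambda>p. if tl p = [] then c' else (\<lambda>_. g) (hd (tl p)) (tl p)) d"
  proof (rule prepend)
    fix d' assume "move tr tau E d d'" "is_dup d \<Longrightarrow> d' = c'"
    show "dup_winning tr tau E g d'" using w dd \<open>is_dup d \<Longrightarrow> d' = c'\<close> by simp
  next
    show "is_dup d \<Longrightarrow> move tr tau E d c'" using mv by simp
  qed
  then show "W d" unfolding W_def by blast
qed

lemma move_S_rew: "move tr tau E (SConf p c m r) d \<Longrightarrow> move tr tau E (SConf p c m r') d"
  by (erule move.cases) (auto intro: move.intros)

lemma move_D_rew: "move tr tau E (DConf p c m r) d \<Longrightarrow> move tr tau E (DConf p c m r') d"
  by (erule move.cases) (auto intro: move.intros)

lemma W_S_rew: "W (SConf p c m r) \<Longrightarrow> W (SConf p c m r')"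
  by (rule W_spoil_intro) (auto intro: W_succ move_S_rew)

lemma W_D_rew: "W (DConf p c m r) \<Longrightarrow> W (DConf p c m r')"
  by (drule W_dup) (auto intro: W_dup_intro[of "DConf p c m r'"] move_D_rew)

lemma chain:
  assumes w0: "W c0" and i0: "Inv c0"
  and step: "\<And>c. Inv c \<Longrightarrow> W c \<Longrightarrow> \<not> is_dup c \<and> (\<exists>d. move tr tau E c d \<and> is_dup d \<and> rew d = Star \<and>
      (\<forall>c'. move tr tau E d c' \<longrightarrow> W c' \<longrightarrow> G \<or> (Inv c' \<and> rew c' = Star)))"
  shows G
proof (rule ccontr)
  assume nG: "\<not> G"
  obtain f where w: "dup_winning tr tau E f c0" using w0 unfolding W_def by blast
  define Pd where "Pd d \<longleftrightarrow> is_dup d \<and> rew d = Star \<and>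
      (\<forall>c'. move tr tau E d c' \<longrightarrow> W c' \<longrightarrow> G \<or> (Inv c' \<and> rew c' = Star))" for d
  define nxt where "nxt p = (if is_dup (last p) then f p else (SOME d. move tr tau E (last p) d \<and> Pd d))" for p
  define pre where "pre k = ((\<lambda>p. p @ [nxt p]) ^^ k) [c0]" for k
  have pre0: "pre 0 = [c0]" by (simp add: pre_def)
  have preS: "pre (Suc k) = pre k @ [nxt (pre k)]" for k by (simp add: pre_def)
  define J where "J c \<longleftrightarrow> (if is_dup c then Pd c else Inv c)" for c
  have inv: "cons_prefix tr tau E f c0 (pre k) \<and> length (pre k) = Suc k \<and> J (last (pre k)) \<and>
      (0 < k \<longrightarrow> rew (last (pre k)) = Star)" for k
  proof (induct k)
    case 0
    have "\<not> is_dup c0" using step[OF i0 w0] by blast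
    then show ?case using i0 by (simp add: pre0 J_def cons_prefix_def)
  next
    case (Suc k)
    define p where "p = pre k"
    have cp: "cons_prefix tr tau E f c0 p" and lp: "length p = Suc k" and Jp: "J (last p)"
      using Suc p_def by auto
    have Wl: "W (last p)" using residual[OF w cp] unfolding W_def by blast
    show ?case
    proof (cases "is_dup (last p)")
      case True
      then have Pl: "Pd (last p)" using Jp J_def by simp
      have nx: "nxt p = f p" using True nxt_def by simp
      have mv: "move tr tau E (last p) (f p)" using w cp True unfolding dup_winning_def by blast
      have cp2: "cons_prefix tr tau E f c0 (p @ [f p])" using mv by (intro cons_extend[OF cp]) auto
      have "W (f p)" using residual[OF w cp2] unfolding W_def by auto
      then have "Inv (f p) \<and> rew (f p) = Star" using Pl mv nG unfolding Pd_def by blast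
      moreover have "\<not> is_dup (f p)" using step calculation \<open>W (f p)\<close> by blast
      ultimately show ?thesis using cp2 lp by (simp add: preS p_def[symmetric] nx J_def)
    next
      case False
      then have Il: "Inv (last p)" using Jp J_def by simp
      have ex: "\<exists>d. move tr tau E (last p) d \<and> Pd d" using step[OF Il Wl] unfolding Pd_def by blast
      have nx: "nxt p = (SOME d. move tr tau E (last p) d \<and> Pd d)" using False nxt_def by simp
      have nxp: "move tr tau E (last p) (nxt p) \<and> Pd (nxt p)" unfolding nx by (rule someI_ex[OF ex])
      have cp2: "cons_prefix tr tau E f c0 (p @ [nxt p])" using nxp False by (intro cons_extend[OF cp]) auto
      show ?thesis using cp2 lp nxp by (simp add: preS p_def[symmetric] J_def Pd_def)
    qed
  qed
  define \<pi> where "\<pi> i = last (pre i)" for i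
  have mp: "map \<pi> [0..<Suc k] = pre k" for k
  proof (induct k)
    case 0 show ?case by (simp add: \<pi>_def pre0)
  next
    case (Suc k) then show ?case by (simp add: \<pi>_def preS del: upt_Suc) (simp add: preS)
  qed
  have "cons_play tr tau E f c0 \<pi>"
    unfolding cons_play_def
  proof (intro conjI allI impI)
    show "\<pi> 0 = c0" by (simp add: \<pi>_def pre0)
  next
    fix i
    have cp: "cons_prefix tr tau E f c0 (pre (Suc i))" and l: "length (pre i) = Suc i" using inv by auto
    have ne: "pre i \<noteq> []" and l1: "length (pre i) - 1 = i" using l by auto
    have e1: "pre (Suc i) ! i = \<pi> i" using l unfolding \<pi>_def preS
      by (simp add: nth_append last_conv_nth[OF ne] l1)
    have e2: "pre (Suc i) ! Suc i = \<pi> (Suc i)" using l unfolding \<pi>_def preS by (metis nth_append_length last_snoc)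
    have e3: "take (Suc i) (pre (Suc i)) = map \<pi> [0..<Suc i]" using l unfolding mp preS by simp
    have "Suc i < length (pre (Suc i))" using inv[of "Suc i"] by simp
    then have "move tr tau E (pre (Suc i) ! i) (pre (Suc i) ! Suc i) \<and>
          (is_dup (pre (Suc i) ! i) \<longrightarrow> pre (Suc i) ! Suc i = f (take (Suc i) (pre (Suc i))))"
      using cp unfolding cons_prefix_def by blast
    then show "move tr tau E (\<pi> i) (\<pi> (Suc i))"
      and "is_dup (\<pi> i) \<Longrightarrow> \<pi> (Suc i) = f (map \<pi> [0..<Suc i])" unfolding e1 e2 e3 by auto
  qed
  then have "\<exists>\<^sub>\<infinity>i. rew (\<pi> i) = Check" using w unfolding dup_winning_def by blast
  then obtain n where "n > 0" "rew (\<pi> n) = Check" unfolding INFM_nat by blast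
  with inv[of n] show False by (simp add: \<pi>_def)
qed

lemma moveS1: "move tr tau E (SConf (u,v) c m r) d \<Longrightarrow>
   (c \<noteq> None \<and> d = DConf (u,v) c m Star) \<or>
   (\<exists>a u'. c = None \<and> tr u a u' \<and> d = DConf (u,v) (Some (a,u')) (Some (v,Frown)) Star) \<or>
   (\<exists>a u'. c \<noteq> Some (a,u') \<and> tr u a u' \<and> d = DConf (u,v) (Some (a,u')) (Some (v,Frown)) Check) \<or>
   (\<exists>a v'. tr v a v' \<and> d = DConf (v,u) (Some (a,v')) (Some (u,Frown)) Check)"
  by (erule move.cases) blast+

lemma moveD1: "move tr tau E (DConf (u,v) (Some (a,u')) (Some (vb,f)) r) d \<Longrightarrow>
   (a = tau \<and> d = SConf (u',vb) None None Star) \<or>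
   (\<exists>v'. f = Frown \<and> tr vb a v' \<and> (d = SConf (u',v') (Some (a,u')) (Some (v',Smile)) Star \<or>
        d = SConf (u',v') None None Check \<or>
        (Smile \<in> E \<and> d = SConf (u,v) (Some (a,u')) (Some (v',Smile)) Star))) \<or>
   (\<exists>v'. tr vb tau v' \<and> (d = SConf (u,v') (Some (a,u')) (Some (v',f)) Star \<or>
        (f = Smile \<and> d = SConf (u',v') None None Check) \<or>
        (f \<in> E \<and> d = SConf (u,v) (Some (a,u')) (Some (v',f)) Star)))"
  by (erule move.cases) blast+

lemma eqW: "equiv_ed tr tau E s t \<longleftrightarrow> W (SConf (s,t) None None Star)"
  by (simp add: equiv_ed_def W_def)

lemma W_succD: "W c \<Longrightarrow> \<not> is_dup c \<Longrightarrow> move tr tau E c (DConf q c1 m1 r1) \<Longrightarrow> W (DConf q c1 m1 r2)"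
  by (rule W_D_rew, rule W_succ)

lemma sym_fresh:
  assumes w: "W (SConf (s,t) None None r)"
  shows "W (SConf (t,s) None None r')"
proof (rule W_spoil_intro)
  show "\<not> is_dup (SConf (t,s) None None r')" by simp
  fix d assume "move tr tau E (SConf (t,s) None None r') d"
  from moveS1[OF this] show "W d"
  proof (elim disjE exE conjE)
    fix a t' assume "tr t a t'" "d = DConf (t,s) (Some (a,t')) (Some (s,Frown)) Star"
    then show "W d" using W_succD[OF w _ move.S3] by simp
  next
    fix a t' assume "tr t a t'" "d = DConf (t,s) (Some (a,t')) (Some (s,Frown)) Check"
    then show "W d" using W_succD[OF w _ move.S3] by simp
  next
    fix a s' assume "tr s a s'" "d = DConf (s,t) (Some (a,s')) (Some (t,Frown)) Check"
    then show "W d" using W_succD[OF w _ move.S2b] by simp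
  qed simp
qed

lemma fresh_frown:
  assumes tr0: "tr u a u'" and w: "W (SConf (u,v) None None r)"
  shows "W (SConf (u,v) (Some (a,u')) (Some (v,Frown)) r')"
proof (rule W_spoil_intro)
  show "\<not> is_dup (SConf (u,v) (Some (a,u')) (Some (v,Frown)) r')" by simp
  fix d assume "move tr tau E (SConf (u,v) (Some (a,u')) (Some (v,Frown)) r') d"
  from moveS1[OF this] show "W d"
  proof (elim disjE exE conjE)
    assume "d = DConf (u, v) (Some (a, u')) (Some (v, Frown)) Star"
    then show "W d" using W_succD[OF w _ move.S2a] tr0 by simp
  next
    fix b u'' assume "tr u b u''" "d = DConf (u,v) (Some (b,u'')) (Some (v,Frown)) Check"
    then show "W d" using W_succD[OF w _ move.S2b] by simp
  next
    fix b v' assume "tr v b v'" "d = DConf (v,u) (Some (b,v')) (Some (u,Frown)) Check"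
    then show "W d" using W_succD[OF w _ move.S3] by simp
  qed simp
qed

lemma frown_fresh:
  assumes tr0: "tr u a u'" and w: "W (SConf (u,v) (Some (a,u')) (Some (v,Frown)) r)"
  shows "W (SConf (u,v) None None r')"
proof (rule W_spoil_intro)
  show "\<not> is_dup (SConf (u,v) None None r')" by simp
  fix d assume "move tr tau E (SConf (u,v) None None r') d"
  from moveS1[OF this] show "W d"
  proof (elim disjE exE conjE)
    fix b u'' assume m: "tr u b u''" and d: "d = DConf (u,v) (Some (b,u'')) (Some (v,Frown)) Star"
    show "W d"
    proof (cases "(b,u'') = (a,u')")
      case True then show ?thesis using W_succD[OF w _ move.S1] d by simp
    next
      case False then show ?thesis unfolding d by (intro W_succD[OF w _ move.S2b]) (use m in auto)
    qed
  next
    fix b u'' assume m: "tr u b u''" and d: "d = DConf (u,v) (Some (b,u'')) (Some (v,Frown)) Check"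
    show "W d"
    proof (cases "(b,u'') = (a,u')")
      case True then show ?thesis using W_succD[OF w _ move.S1] d by simp
    next
      case False then show ?thesis unfolding d by (intro W_succD[OF w _ move.S2b]) (use m in auto)
    qed
  next
    fix b v' assume "tr v b v'" "d = DConf (v,u) (Some (b,v')) (Some (u,Frown)) Check"
    then show "W d" using W_succD[OF w _ move.S3] by simp
  qed simp
qed

lemma smile_fresh:
  assumes w: "W (SConf (u,v) (Some (a,u)) (Some (v,Smile)) r)"
    and h: "tr u a u \<Longrightarrow> W (DConf (u,v) (Some (a,u)) (Some (v,Frown)) Star)"
  shows "W (SConf (u,v) None None r')"
proof (rule W_spoil_intro)
  show "\<not> is_dup (SConf (u,v) None None r')" by simp
  fix d assume "move tr tau E (SConf (u,v) None None r') d"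
  from moveS1[OF this] show "W d"
  proof (elim disjE exE conjE)
    fix b u'' assume m: "tr u b u''" and d: "d = DConf (u,v) (Some (b,u'')) (Some (v,Frown)) Star"
    show "W d"
    proof (cases "(b,u'') = (a,u)")
      case True then show ?thesis using h d m by simp
    next
      case False then show ?thesis unfolding d by (intro W_succD[OF w _ move.S2b]) (use m in auto)
    qed
  next
    fix b u'' assume m: "tr u b u''" and d: "d = DConf (u,v) (Some (b,u'')) (Some (v,Frown)) Check"
    show "W d"
    proof (cases "(b,u'') = (a,u)")
      case True then show ?thesis using h d m W_D_rew by auto
    next
      case False then show ?thesis unfolding d by (intro W_succD[OF w _ move.S2b]) (use m in auto)
    qed
  next
    fix b v' assume "tr v b v'" "d = DConf (v,u) (Some (b,v')) (Some (u,Frown)) Check"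
    then show "W d" using W_succD[OF w _ move.S3] by simp
  qed simp
qed

lemma frown_from_smile:
  assumes w: "W (SConf (u,v) (Some (a,u)) (Some (v,Smile)) r)"
    and h: "W (DConf (u,v) (Some (a,u)) (Some (v,Frown)) Star)"
  shows "W (SConf (u,v) (Some (a,u)) (Some (v,Frown)) r')"
proof (rule W_spoil_intro)
  show "\<not> is_dup (SConf (u,v) (Some (a,u)) (Some (v,Frown)) r')" by simp
  fix d assume "move tr tau E (SConf (u,v) (Some (a,u)) (Some (v,Frown)) r') d"
  from moveS1[OF this] show "W d"
  proof (elim disjE exE conjE)
    assume "d = DConf (u, v) (Some (a, u)) (Some (v, Frown)) Star"
    then show "W d" using h by simp
  next
    fix b u'' assume "Some (a, u) \<noteq> Some (b, u'')" "tr u b u''" "d = DConf (u,v) (Some (b,u'')) (Some (v,Frown)) Check"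
    then show "W d" using W_succD[OF w _ move.S2b] by simp
  next
    fix b v' assume "tr v b v'" "d = DConf (v,u) (Some (b,v')) (Some (u,Frown)) Check"
    then show "W d" using W_succD[OF w _ move.S3] by simp
  qed simp
qed

lemma lemmaA:
  assumes nE: "Smile \<notin> E" and loop: "tr u a u"
    and w0: "W (SConf (u,v0) (Some (a,u)) (Some (v0,Smile)) Star)"
  shows "W (DConf (u,v0) (Some (a,u)) (Some (v0,Frown)) Star)"
proof (rule chain[where Inv = "\<lambda>c. \<exists>v. c = SConf (u,v) (Some (a,u)) (Some (v,Smile)) Star \<and>
      (W (DConf (u,v) (Some (a,u)) (Some (v,Frown)) Star) \<longrightarrow> W (DConf (u,v0) (Some (a,u)) (Some (v0,Frown)) Star))"])
  show "W (SConf (u,v0) (Some (a,u)) (Some (v0,Smile)) Star)" by fact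
  show "\<exists>v. SConf (u,v0) (Some (a,u)) (Some (v0,Smile)) Star = SConf (u,v) (Some (a,u)) (Some (v,Smile)) Star \<and>
      (W (DConf (u,v) (Some (a,u)) (Some (v,Frown)) Star) \<longrightarrow> W (DConf (u,v0) (Some (a,u)) (Some (v0,Frown)) Star))"
    by blast
next
  fix c
  assume "\<exists>v. c = SConf (u,v) (Some (a,u)) (Some (v,Smile)) Star \<and>
      (W (DConf (u,v) (Some (a,u)) (Some (v,Frown)) Star) \<longrightarrow> W (DConf (u,v0) (Some (a,u)) (Some (v0,Frown)) Star))"
    and wc: "W c"
  then obtain v where c: "c = SConf (u,v) (Some (a,u)) (Some (v,Smile)) Star"
    and G: "W (DConf (u,v) (Some (a,u)) (Some (v,Frown)) Star) \<Longrightarrow> W (DConf (u,v0) (Some (a,u)) (Some (v0,Frown)) Star)"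
    by blast
  define d where "d = DConf (u,v) (Some (a,u)) (Some (v,Smile)) Star"
  have md: "move tr tau E c d" unfolding c d_def by (rule move.S1) simp
  have "\<forall>c'. move tr tau E d c' \<longrightarrow> W c' \<longrightarrow> W (DConf (u,v0) (Some (a,u)) (Some (v0,Frown)) Star) \<or>
      ((\<exists>v. c' = SConf (u,v) (Some (a,u)) (Some (v,Smile)) Star \<and>
      (W (DConf (u,v) (Some (a,u)) (Some (v,Frown)) Star) \<longrightarrow> W (DConf (u,v0) (Some (a,u)) (Some (v0,Frown)) Star)))
      \<and> rew c' = Star)"
  proof (intro allI impI)
    fix c' assume m: "move tr tau E d c'" and wc': "W c'"
    from moveD1[OF m[unfolded d_def]] nE
    show "W (DConf (u,v0) (Some (a,u)) (Some (v0,Frown)) Star) \<or>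
      ((\<exists>v. c' = SConf (u,v) (Some (a,u)) (Some (v,Smile)) Star \<and>
      (W (DConf (u,v) (Some (a,u)) (Some (v,Frown)) Star) \<longrightarrow> W (DConf (u,v0) (Some (a,u)) (Some (v0,Frown)) Star)))
      \<and> rew c' = Star)"
    proof (elim disjE exE conjE)
      assume "a = tau" "c' = SConf (u, v) None None Star"
      then have "W (DConf (u,v) (Some (a,u)) (Some (v,Frown)) Star)"
        using wc' by (intro W_dup_intro[OF _ move.D1]) auto
      then show ?thesis using G by blast
    next
      fix v' assume t: "tr v tau v'" and c': "c' = SConf (u, v') (Some (a, u)) (Some (v', Smile)) Star"
      have "W (DConf (u,v') (Some (a,u)) (Some (v',Frown)) Star) \<longrightarrow> W (DConf (u,v0) (Some (a,u)) (Some (v0,Frown)) Star)"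
      proof
        assume "W (DConf (u,v') (Some (a,u)) (Some (v',Frown)) Star)"
        then have "W (SConf (u,v') (Some (a,u)) (Some (v',Frown)) Star)"
          using frown_from_smile wc' c' by blast
        then have "W (DConf (u,v) (Some (a,u)) (Some (v,Frown)) Star)"
          using t by (intro W_dup_intro[OF _ move.D3a]) auto
        then show "W (DConf (u,v0) (Some (a,u)) (Some (v0,Frown)) Star)" by (rule G)
      qed
      then show ?thesis using c' by auto
    next
      fix v' assume t: "tr v tau v'" and c': "c' = SConf (u, v') None None Check"
      have "W (SConf (u,v') (Some (a,u)) (Some (v',Frown)) Star)"
        using fresh_frown[OF loop] wc' c' by blast
      then have "W (DConf (u,v) (Some (a,u)) (Some (v,Frown)) Star)"
        using t by (intro W_dup_intro[OF _ move.D3a]) auto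
      then show ?thesis using G by blast
    qed simp_all
  qed
  then show "\<not> is_dup c \<and> (\<exists>d. move tr tau E c d \<and> is_dup d \<and> rew d = Star \<and>
      (\<forall>c'. move tr tau E d c' \<longrightarrow> W c' \<longrightarrow> W (DConf (u,v0) (Some (a,u)) (Some (v0,Frown)) Star) \<or>
      ((\<exists>v. c' = SConf (u,v) (Some (a,u)) (Some (v,Smile)) Star \<and>
      (W (DConf (u,v) (Some (a,u)) (Some (v,Frown)) Star) \<longrightarrow> W (DConf (u,v0) (Some (a,u)) (Some (v0,Frown)) Star)))
      \<and> rew c' = Star)))"
    using md c by (auto simp: d_def)
qed

lemma tau_ext: "tau_steps tr tau v0 vb \<Longrightarrow> tr vb tau v' \<Longrightarrow> tau_steps tr tau v0 v'"
  unfolding tau_steps_def by (rule rtranclp.rtrancl_into_rtrancl)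

lemma tau_refl: "tau_steps tr tau v v"
  unfolding tau_steps_def by simp

lemma phase2:
  assumes w0: "W (SConf (u0,w0) (Some (a,s')) (Some (v0,Smile)) Star)"
    and hR: "y = ObB \<Longrightarrow> equiv_ed tr tau E s' v0"
  shows "\<exists>t'. wstep tr tau y (equiv_ed tr tau E) s' v0 t' \<and> equiv_ed tr tau E s' t'"
proof (rule chain[where Inv = "\<lambda>c. \<exists>u w vb. c = SConf (u,w) (Some (a,s')) (Some (vb,Smile)) Star \<and> tau_steps tr tau v0 vb"])
  show "W (SConf (u0,w0) (Some (a,s')) (Some (v0,Smile)) Star)" by fact
  show "\<exists>u w vb. SConf (u0,w0) (Some (a,s')) (Some (v0,Smile)) Star = SConf (u,w) (Some (a,s')) (Some (vb,Smile)) Star \<and> tau_steps tr tau v0 vb"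
    using tau_refl by blast
next
  fix c
  assume "\<exists>u w vb. c = SConf (u,w) (Some (a,s')) (Some (vb,Smile)) Star \<and> tau_steps tr tau v0 vb"
  then obtain u w vb where c: "c = SConf (u,w) (Some (a,s')) (Some (vb,Smile)) Star"
    and ts: "tau_steps tr tau v0 vb" by blast
  define G where "G = (\<exists>t'. wstep tr tau y (equiv_ed tr tau E) s' v0 t' \<and> equiv_ed tr tau E s' t')"
  have Gi: "G" if "tau_steps tr tau v0 t'" "W (SConf (s',t') None None Star)" for t'
    using that hR unfolding G_def wstep_def eqW by blast
  define d where "d = DConf (u,w) (Some (a,s')) (Some (vb,Smile)) Star"
  have md: "move tr tau E c d" unfolding c d_def by (rule move.S1) simp
  have "\<forall>c'. move tr tau E d c' \<longrightarrow> W c' \<longrightarrow> G \<or>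
      ((\<exists>u w vb. c' = SConf (u,w) (Some (a,s')) (Some (vb,Smile)) Star \<and> tau_steps tr tau v0 vb) \<and> rew c' = Star)"
  proof (intro allI impI)
    fix c' assume m: "move tr tau E d c'" and wc': "W c'"
    from moveD1[OF m[unfolded d_def]]
    show "G \<or> ((\<exists>u w vb. c' = SConf (u,w) (Some (a,s')) (Some (vb,Smile)) Star \<and> tau_steps tr tau v0 vb) \<and> rew c' = Star)"
    proof (elim disjE exE conjE)
      assume "a = tau" "c' = SConf (s', vb) None None Star"
      then show ?thesis using Gi[OF ts] wc' by simp
    next
      fix v' assume t: "tr vb tau v'" and c': "c' = SConf (u, v') (Some (a, s')) (Some (v', Smile)) Star"
      then show ?thesis using tau_ext[OF ts t] by auto
    next
      fix v' assume t: "tr vb tau v'" and c': "c' = SConf (s', v') None None Check"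
      then show ?thesis using Gi[OF tau_ext[OF ts t]] wc' W_S_rew by blast
    next
      fix v' assume t: "tr vb tau v'" and c': "c' = SConf (u, w) (Some (a, s')) (Some (v', Smile)) Star"
      then show ?thesis using tau_ext[OF ts t] by auto
    qed simp_all
  qed
  then show "\<not> is_dup c \<and> (\<exists>d. move tr tau E c d \<and> is_dup d \<and> rew d = Star \<and>
      (\<forall>c'. move tr tau E d c' \<longrightarrow> W c' \<longrightarrow> (\<exists>t'. wstep tr tau y (equiv_ed tr tau E) s' v0 t' \<and> equiv_ed tr tau E s' t') \<or>
      ((\<exists>u w vb. c' = SConf (u,w) (Some (a,s')) (Some (vb,Smile)) Star \<and> tau_steps tr tau v0 vb) \<and> rew c' = Star)))"
    using md c unfolding G_def by (auto simp: d_def)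
qed

lemma phase1:
  assumes hx: "Frown \<in> E \<Longrightarrow> x = ObO" and hy: "Smile \<in> E \<Longrightarrow> y = ObO"
    and Rst: "equiv_ed tr tau E s t" and tr0: "tr s a s'"
  shows "(a = tau \<and> equiv_ed tr tau E s' t) \<or>
    (\<exists>t' t1 t2. wstep tr tau x (equiv_ed tr tau E) s t t1 \<and> tr t1 a t2 \<and>
       wstep tr tau y (equiv_ed tr tau E) s' t2 t' \<and> equiv_ed tr tau E s' t')"
    (is "?G")
proof (rule chain[where Inv = "\<lambda>c. \<exists>w vb. c = SConf (s,w) (Some (a,s')) (Some (vb,Frown)) Star \<and>
      wstep tr tau x (equiv_ed tr tau E) s t vb \<and>
      (vb = t \<or> (\<exists>t1. wstep tr tau x (equiv_ed tr tau E) s t t1 \<and> tr t1 tau vb))"])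
  show "W (SConf (s,t) (Some (a,s')) (Some (t,Frown)) Star)"
    using fresh_frown[OF tr0] Rst unfolding eqW by blast
  show "\<exists>w vb. SConf (s,t) (Some (a,s')) (Some (t,Frown)) Star = SConf (s,w) (Some (a,s')) (Some (vb,Frown)) Star \<and>
      wstep tr tau x (equiv_ed tr tau E) s t vb \<and>
      (vb = t \<or> (\<exists>t1. wstep tr tau x (equiv_ed tr tau E) s t t1 \<and> tr t1 tau vb))"
    using Rst tau_refl unfolding wstep_def by blast
next
  fix c
  assume "\<exists>w vb. c = SConf (s,w) (Some (a,s')) (Some (vb,Frown)) Star \<and>
      wstep tr tau x (equiv_ed tr tau E) s t vb \<and>
      (vb = t \<or> (\<exists>t1. wstep tr tau x (equiv_ed tr tau E) s t t1 \<and> tr t1 tau vb))"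
  then obtain w vb where c: "c = SConf (s,w) (Some (a,s')) (Some (vb,Frown)) Star"
    and ws: "wstep tr tau x (equiv_ed tr tau E) s t vb"
    and pr: "vb = t \<or> (\<exists>t1. wstep tr tau x (equiv_ed tr tau E) s t t1 \<and> tr t1 tau vb)" by blast
  have ts: "tau_steps tr tau t vb" using ws unfolding wstep_def by blast
  have Gi: "?G" if "tr vb a t2" "wstep tr tau y (equiv_ed tr tau E) s' t2 t'" "equiv_ed tr tau E s' t'" for t2 t'
    using that ws by blast
  have Gi2: "?G" if "tr vb a t2" "W (SConf (s',t2) None None Star)" for t2
    by (rule Gi[OF that(1) _ that(2)[folded eqW]]) (use that(2) tau_refl in \<open>auto simp: wstep_def eqW\<close>)
  let ?Inv = "\<lambda>c. \<exists>w vb. c = SConf (s,w) (Some (a,s')) (Some (vb,Frown)) Star \<and>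
      wstep tr tau x (equiv_ed tr tau E) s t vb \<and>
      (vb = t \<or> (\<exists>t1. wstep tr tau x (equiv_ed tr tau E) s t t1 \<and> tr t1 tau vb))"
  define d where "d = DConf (s,w) (Some (a,s')) (Some (vb,Frown)) Star"
  have md: "move tr tau E c d" unfolding c d_def by (rule move.S1) simp
  have "\<forall>c'. move tr tau E d c' \<longrightarrow> W c' \<longrightarrow> ?G \<or> (?Inv c' \<and> rew c' = Star)"
  proof (intro allI impI)
    fix c' assume m: "move tr tau E d c'" and wc': "W c'"
    from moveD1[OF m[unfolded d_def]]
    show "?G \<or> (?Inv c' \<and> rew c' = Star)"
    proof (elim disjE exE conjE)
      assume at: "a = tau" and c': "c' = SConf (s', vb) None None Star"
      have R: "equiv_ed tr tau E s' vb" using wc' c' eqW by simp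
      from pr show ?thesis
      proof
        assume "vb = t" then show ?thesis using at R by simp
      next
        assume "\<exists>t1. wstep tr tau x (equiv_ed tr tau E) s t t1 \<and> tr t1 tau vb"
        then obtain t1 where "wstep tr tau x (equiv_ed tr tau E) s t t1" "tr t1 tau vb" by blast
        moreover have "wstep tr tau y (equiv_ed tr tau E) s' vb vb" using R tau_refl unfolding wstep_def by blast
        ultimately show ?thesis using at R by blast
      qed
    next
      fix v' assume t: "tr vb a v'" and c': "c' = SConf (s', v') (Some (a, s')) (Some (v', Smile)) Star"
      have "y = ObB \<Longrightarrow> equiv_ed tr tau E s' v'"
      proof -
        assume "y = ObB"
        then have nE: "Smile \<notin> E" using hy by auto
        have "W (SConf (s', v') None None Star)"
          using smile_fresh[OF wc'[unfolded c'] lemmaA[OF nE _ wc'[unfolded c']]] by blast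
        then show ?thesis using eqW by simp
      qed
      from phase2[OF wc'[unfolded c'] this] obtain t' where
        "wstep tr tau y (equiv_ed tr tau E) s' v' t'" "equiv_ed tr tau E s' t'" by blast
      then show ?thesis using Gi[OF t] by blast
    next
      fix v' assume t: "tr vb a v'" and c': "c' = SConf (s', v') None None Check"
      then show ?thesis using Gi2[OF t] wc' W_S_rew by blast
    next
      fix v' assume t: "tr vb a v'" and "Smile \<in> E" and c': "c' = SConf (s, w) (Some (a, s')) (Some (v', Smile)) Star"
      then have "y = ObO" using hy by simp
      from phase2[OF wc'[unfolded c']] \<open>y = ObO\<close> obtain t' where
        "wstep tr tau y (equiv_ed tr tau E) s' v' t'" "equiv_ed tr tau E s' t'" by blast
      then show ?thesis using Gi[OF t] by blast
    next
      fix v' assume t: "tr vb tau v'" and c': "c' = SConf (s, v') (Some (a, s')) (Some (v', Frown)) Star"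
      have "W (SConf (s, v') None None Star)" using frown_fresh[OF tr0] wc' c' by blast
      then have R: "equiv_ed tr tau E s v'" using eqW by simp
      have "wstep tr tau x (equiv_ed tr tau E) s t v'"
        using ws R tau_ext[OF ts t] unfolding wstep_def by blast
      then have "?Inv c'" using c' ws t by blast
      then show ?thesis using c' by simp
    next
      fix v' assume t: "tr vb tau v'" and "Frown \<in> E" and c': "c' = SConf (s, w) (Some (a, s')) (Some (v', Frown)) Star"
      then have "x = ObO" using hx by simp
      then have "wstep tr tau x (equiv_ed tr tau E) s t v'"
        using tau_ext[OF ts t] unfolding wstep_def by blast
      then have "?Inv c'" using c' ws t by blast
      then show ?thesis using c' by simp
    qed simp_all
  qed
  then show "\<not> is_dup c \<and> (\<exists>d. move tr tau E c d \<and> is_dup d \<and> rew d = Star \<and>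
      (\<forall>c'. move tr tau E d c' \<longrightarrow> W c' \<longrightarrow> ?G \<or> (?Inv c' \<and> rew c' = Star)))"
    using md c by (auto simp: d_def)
qed

end

theorem lemma6p8:
  fixes tr :: "'s \<Rightarrow> 'a \<Rightarrow> 's \<Rightarrow> bool" and tau :: 'a and x y :: ob
  shows "generic_bisim tr tau x y (equiv_ed tr tau (Exy x y))"
  unfolding generic_bisim_def
proof (intro conjI allI impI)
  show "symp (equiv_ed tr tau (Exy x y))"
    by (rule sympI) (simp add: eqW sym_fresh)
next
  fix s t a s'
  assume "equiv_ed tr tau (Exy x y) s t" "tr s a s'"
  then show "a = tau \<and> equiv_ed tr tau (Exy x y) s' t \<or>
       (\<exists>t' t1 t2. wstep tr tau x (equiv_ed tr tau (Exy x y)) s t t1 \<and> tr t1 a t2 \<and>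
         wstep tr tau y (equiv_ed tr tau (Exy x y)) s' t2 t' \<and> equiv_ed tr tau (Exy x y) s' t')"
    by (intro phase1) (auto simp: Exy_def)
qed

end
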